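(* Let $(X,d)$ be a Polish metric space, $1<p<\infty$, $E:\mathcal P_p(X)\to(-\infty,+\infty]$ proper and $G:\mathcal P_p(X)\to[0,+\infty]$ a weak upper gradient for $E$. Fix $\rho_0\in Z_{E,p}$ and a $p$-curve of maximal slope $\rho$ for $E$ w.r.t. $G$ with $\rho(0)=\rho_0$. Assume (A1), (A3) and either (A2) or (A2'). Then the trajectory $\bigcup_{t\ge0}\{\rho(t)\}$ is relatively compact in $\mathcal P_p(X)$ with respect to the $\sigma$-topology.
   Context: $\mathcal P(X)$: Borel probability measures with the narrow topology; $\mathcal P_p(X)$: those with finite $p$-th moment, with the $p$-Wasserstein distance $W_p$; the $\sigma$-topology on $\mathcal P_p(X)$ is the narrow topology restricted to $\mathcal P_p(X)$. $q=p/(p-1)$. $\rho\in AC([0,\infty);\mathcal P_p(X))$ means: for each $T>0$ there is $m\in L^1([0,T])$ with $W_p(\rho(t),\rho(s))\le\int_s^tm$ for $0\le s<t\le T$; metric derivative $|\rho'|(t)=\lim_{s\to t}W_p(\rho(t),\rho(s))/|t-s|$. $G$ is a weak upper gradient for $E$ if for every absolutely continuous curve $\rho$ on $[0,T]$ with $(G\circ\rho)|\rho'|\in L^1([0,T])$, $E\circ\rho$ is a.e. equal to a function $\varphi$ of finite pointwise variation with $|\varphi'|\le G(\rho)|\rho'|$ a.e. A $p$-curve of maximal slope is $\rho\in AC([0,\infty);\mathcal P_p(X))$ with $E\circ\rho$ a.e. equal to a non-increasing $\varphi$ satisfying $\varphi'(t)=-\frac1p|\rho'|^p(t)-\frac1qG^q(\rho(t))$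 for a.e. $t$. $Z_{E,p}=\{\mu\in\mathcal P_p(X):E(\mu)<\infty\}$. (A1) $E$ proper, bounded below, l.s.c. w.r.t. the $\sigma$-topology. (A2) For every $C\in\mathbb R$, $\{\mu\in\mathcal P_p(X):E(\mu)\le C\}$ is relatively compact in the $\sigma$-topology. (A2') There is $\mathcal Y\subset\mathcal P_p(X)$ containing $\rho(t)$ for all $t\ge0$ such that $\{\mu\in\mathcal P_p(X)\cap\mathcal Y:E(\mu)\le C\}$ is relatively compact in the $\sigma$-topology for every $C$. (A3) $G$ l.s.c. w.r.t. the $\sigma$-topology. *)

theory Defs
  imports "HOL-Probability.Probability"
begin

definition prob_measures :: "'a::polish_space measure set" where
  "prob_measures = {\<mu>. prob_space \<mu> \<and> sets \<mu> = sets borel}"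

definition Pp :: "real \<Rightarrow> 'a::polish_space measure set" where
  "Pp p = {\<mu> \<in> prob_measures. \<exists>x0. (\<integral>\<^sup>+ x. ennreal (dist x x0 powr p) \<partial>\<mu>) < \<infinity>}"

definition narrow_topology :: "'a::polish_space measure topology" where
  "narrow_topology = topology_generated_by
     {{\<mu> \<in> prob_measures. (\<integral>x. f x \<partial>\<mu>) \<in> U} | f U.
        continuous_on UNIV f \<and> bounded (range f) \<and> open (U :: real set)}"

definition sigma_top :: "real \<Rightarrow> 'a::polish_space measure topology" where
  "sigma_top p = subtopology narrow_topology (Pp p)"

definition couplings :: "'a::polish_space measure \<Rightarrow> 'a measure \<Rightarrow> ('a \<times> 'a) measure set" where
  "couplings \<mu> \<nu> = {\<gamma>. prob_space \<gamma> \<and> sets \<gamma> = sets borel \<and>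
                        distr \<gamma> borel fst = \<mu> \<and> distr \<gamma> borel snd = \<nu>}"

definition Wp :: "real \<Rightarrow> 'a::polish_space measure \<Rightarrow> 'a measure \<Rightarrow> real" where
  "Wp p \<mu> \<nu> = (enn2real (INF \<gamma>\<in>couplings \<mu> \<nu>.
       \<integral>\<^sup>+ z. ennreal (dist (fst z) (snd z) powr p) \<partial>\<gamma>)) powr (1 / p)"

definition rel_compact_in :: "'b topology \<Rightarrow> 'b set \<Rightarrow> bool" where
  "rel_compact_in T S \<longleftrightarrow> S \<subseteq> topspace T \<and> compactin T (T closure_of S)"

definition ac_on :: "real \<Rightarrow> real \<Rightarrow> (real \<Rightarrow> 'a::polish_space measure) \<Rightarrow> bool" where
  "ac_on p T \<rho> \<longleftrightarrow> (\<forall>t\<in>{0..T}. \<rho> t \<in> Pp p) \<and>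
     (\<exists>m. set_integrable lborel {0..T} m \<and>
        (\<forall>s t. 0 \<le> s \<and> s < t \<and> t \<le> T \<longrightarrow>
           Wp p (\<rho> t) (\<rho> s) \<le> (LINT \<tau>:{s..t}|lborel. m \<tau>)))"

definition ac_infty :: "real \<Rightarrow> (real \<Rightarrow> 'a::polish_space measure) \<Rightarrow> bool" where
  "ac_infty p \<rho> \<longleftrightarrow> (\<forall>t\<ge>0. \<rho> t \<in> Pp p) \<and> (\<forall>T>0. ac_on p T \<rho>)"

definition metric_deriv :: "real \<Rightarrow> real set \<Rightarrow> (real \<Rightarrow> 'a::polish_space measure) \<Rightarrow> real \<Rightarrow> real" where
  "metric_deriv p S \<rho> t = Lim (at t within S) (\<lambda>s. Wp p (\<rho> t) (\<rho> s) / \<bar>t - s\<bar>)"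

definition finite_pvar :: "real \<Rightarrow> (real \<Rightarrow> real) \<Rightarrow> bool" where
  "finite_pvar T \<phi> \<longleftrightarrow> (\<exists>B. \<forall>n (t :: nat \<Rightarrow> real).
      (\<forall>i<n. t i < t (Suc i)) \<and> 0 \<le> t 0 \<and> t n \<le> T \<longrightarrow>
      (\<Sum>i<n. \<bar>\<phi> (t (Suc i)) - \<phi> (t i)\<bar>) \<le> B)"

definition weak_upper_gradient ::
  "real \<Rightarrow> ('a::polish_space measure \<Rightarrow> ereal) \<Rightarrow> ('a measure \<Rightarrow> ennreal) \<Rightarrow> bool" where
  "weak_upper_gradient p E G \<longleftrightarrow>
    (\<forall>T>0. \<forall>\<rho>. ac_on p T \<rho> \<and>
       (\<lambda>t. G (\<rho> t) * ennreal (metric_deriv p {0..T} \<rho> t))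
          \<in> borel_measurable (restrict_space lborel {0..T}) \<and>
       (\<integral>\<^sup>+ t\<in>{0..T}. G (\<rho> t) * ennreal (metric_deriv p {0..T} \<rho> t) \<partial>lborel) < \<infinity>
     \<longrightarrow> (\<exists>\<phi>. finite_pvar T \<phi> \<and>
            (AE t in lborel. t \<in> {0..T} \<longrightarrow> E (\<rho> t) = ereal (\<phi> t)) \<and>
            (AE t in lborel. t \<in> {0<..<T} \<longrightarrow>
               (\<exists>D. (\<phi> has_real_derivative D) (at t) \<and>
                    ennreal \<bar>D\<bar> \<le> G (\<rho> t) * ennreal (metric_deriv p {0..T} \<rho> t)))))"

definition curve_max_slope ::
  "real \<Rightarrow> ('a::polish_space measure \<Rightarrow> ereal) \<Rightarrow> ('a measure \<Rightarrow> ennreal) \<Rightarrow> (real \<Rightarrow> 'a measure) \<Rightarrow> bool" where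
  "curve_max_slope p E G \<rho> \<longleftrightarrow> ac_infty p \<rho> \<and>
    (\<exists>\<phi>. (\<forall>s t. 0 \<le> s \<and> s \<le> t \<longrightarrow> \<phi> t \<le> \<phi> s) \<and>
         (AE t in lborel. t \<ge> 0 \<longrightarrow> E (\<rho> t) = ereal (\<phi> t)) \<and>
         (AE t in lborel. t > 0 \<longrightarrow> G (\<rho> t) \<noteq> \<infinity> \<and>
            (\<phi> has_real_derivative
               (- (1 / p) * metric_deriv p {0..} \<rho> t powr p
                - (1 / (p / (p - 1))) * enn2real (G (\<rho> t)) powr (p / (p - 1)))) (at t)))"

definition Z_set :: "real \<Rightarrow> ('a::polish_space measure \<Rightarrow> ereal) \<Rightarrow> 'a measure set" where
  "Z_set p E = {\<mu> \<in> Pp p. E \<mu> < \<infinity>}"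

definition proper_fun :: "real \<Rightarrow> ('a::polish_space measure \<Rightarrow> ereal) \<Rightarrow> bool" where
  "proper_fun p E \<longleftrightarrow> (\<forall>\<mu>\<in>Pp p. E \<mu> \<noteq> -\<infinity>) \<and> (\<exists>\<mu>\<in>Pp p. E \<mu> < \<infinity>)"

definition A1 :: "real \<Rightarrow> ('a::polish_space measure \<Rightarrow> ereal) \<Rightarrow> bool" where
  "A1 p E \<longleftrightarrow> proper_fun p E \<and> (\<exists>c::real. \<forall>\<mu>\<in>Pp p. ereal c \<le> E \<mu>) \<and>
     (\<forall>c. closedin (sigma_top p) {\<mu> \<in> Pp p. E \<mu> \<le> c})"

definition A2 :: "real \<Rightarrow> ('a::polish_space measure \<Rightarrow> ereal) \<Rightarrow> bool" where
  "A2 p E \<longleftrightarrow> (\<forall>C::real. rel_compact_in (sigma_top p) {\<mu> \<in> Pp p. E \<mu> \<le> ereal C})"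

definition A2' :: "real \<Rightarrow> ('a::polish_space measure \<Rightarrow> ereal) \<Rightarrow> (real \<Rightarrow> 'a measure) \<Rightarrow> bool" where
  "A2' p E \<rho> \<longleftrightarrow> (\<exists>Y \<subseteq> Pp p. (\<forall>t\<ge>0. \<rho> t \<in> Y) \<and>
      (\<forall>C::real. rel_compact_in (sigma_top p) {\<mu> \<in> Pp p \<inter> Y. E \<mu> \<le> ereal C}))"

definition A3 :: "real \<Rightarrow> ('a::polish_space measure \<Rightarrow> ennreal) \<Rightarrow> bool" where
  "A3 p G \<longleftrightarrow> (\<forall>c. closedin (sigma_top p) {\<mu> \<in> Pp p. G \<mu> \<le> c})"

end

theory Submission
  imports Defs
begin

lemma limitin_generatedI:
  assumes "l \<in> \<Union>S" "\<And>U. U \<in> S \<Longrightarrow> l \<in> U \<Longrightarrow> eventually (\<lambda>x. f x \<in> U) F"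
  shows "limitin (topology_generated_by S) f l F"
  unfolding limitin_def
proof (intro conjI allI impI)
  show "l \<in> topspace (topology_generated_by S)" using assms(1) by simp
  fix U assume "openin (topology_generated_by S) U \<and> l \<in> U"
  then have g: "generate_topology_on S U" and "l \<in> U"
    by (auto dest: openin_topology_generated_by)
  have "l \<in> U \<longrightarrow> eventually (\<lambda>x. f x \<in> U) F" using g
  proof (induct rule: generate_topology_on.induct)
    case (Int a b) then show ?case by (auto intro: eventually_conj)
  next
    case (UN K)
    show ?case
    proof
      assume "l \<in> \<Union>K"
      then obtain k where "k \<in> K" "l \<in> k" by blast
      then have "eventually (\<lambda>x. f x \<in> k) F" using UN(2) by blast
      then show "eventually (\<lambda>x. f x \<in> \<Union>K) F" by (rule eventually_mono) (use \<open>k \<in> K\<close> in blast)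
    qed
  next
    case (Basis s) then show ?case using assms(2) by auto
  qed simp
  then show "eventually (\<lambda>x. f x \<in> U) F" using \<open>l \<in> U\<close> by simp
qed

lemma AE_exists_between:
  assumes "AE x in lborel. P x" "(a::real) < b"
  shows "\<exists>x. a < x \<and> x < b \<and> P x"
proof (rule ccontr)
  assume na: "\<not> ?thesis"
  from assms(1) obtain N where N: "{x. \<not> P x} \<subseteq> N" "N \<in> sets lborel" "emeasure lborel N = 0"
    by (auto elim!: AE_E)
  have "{a<..<b} \<subseteq> N" using na N(1) by auto
  then have "emeasure lborel {a<..<b} \<le> emeasure lborel N" using N(2) by (intro emeasure_mono) auto
  then show False using N(3) assms(2) by simp
qed

lemma unif_near_compact:
  fixes f :: "'a::metric_space \<Rightarrow> real"
  assumes "continuous_on UNIV f" "compact K" "e > 0"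
  obtains d where "d > 0" "\<And>x y. y \<in> K \<Longrightarrow> dist x y < d \<Longrightarrow> \<bar>f x - f y\<bar> < e"
proof -
  let ?G = "(\<lambda>z. f -` ball (f z) (e/2)) ` UNIV"
  have opn: "open G" if "G \<in> ?G" for G
    using that assms(1) by (auto intro!: open_vimage)
  have "K \<subseteq> \<Union>?G"
  proof
    fix x assume "x \<in> K"
    have "x \<in> f -` ball (f x) (e/2)" using assms(3) by simp
    then show "x \<in> \<Union>?G" by blast
  qed
  from Heine_Borel_lemma[OF assms(2) this opn] obtain d where
    d: "0 < d" "\<And>x. x \<in> K \<Longrightarrow> \<exists>G \<in> ?G. ball x d \<subseteq> G" by blast
  show ?thesis
  proof (rule that[OF d(1)])
    fix x y assume "y \<in> K" "dist x y < d"
    then obtain z where z: "ball y d \<subseteq> f -` ball (f z) (e/2)" using d(2) by blast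
    have "y \<in> ball y d" using d(1) by simp
    have "x \<in> ball y d" using \<open>dist x y < d\<close> by (simp add: dist_commute)
    then have "f x \<in> ball (f z) (e/2)" using z by blast
    moreover have "f y \<in> ball (f z) (e/2)" using z \<open>y \<in> ball y d\<close> by blast
    ultimately have "dist (f z) (f x) < e/2 \<and> dist (f z) (f y) < e/2" by (simp only: mem_ball)
    then show "\<bar>f x - f y\<bar> < e" unfolding dist_real_def by linarith
  qed
qed

lemma tight:
  fixes \<mu> :: "'a::polish_space measure"
  assumes "prob_space \<mu>" "sets \<mu> = sets borel" "e > 0"
  obtains K where "compact K" "measure \<mu> (UNIV - K) < e"
proof -
  interpret prob_space \<mu> by fact
  have sp: "space \<mu> = UNIV" using assms(2) by (metis sets_eq_imp_space_eq space_borel)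
  have "emeasure \<mu> UNIV = (SUP K \<in> {K. K \<subseteq> UNIV \<and> compact K}. emeasure \<mu> K)"
    by (rule inner_regular) (use assms sp in auto)
  moreover have "emeasure \<mu> UNIV = 1" using emeasure_space_1 sp by simp
  ultimately have "ennreal (1 - e) < (SUP K \<in> {K. K \<subseteq> UNIV \<and> compact K}. emeasure \<mu> K)"
    using assms(3) by (simp add: ennreal_lessI)
  then obtain K where K: "compact K" "ennreal (1 - e) < emeasure \<mu> K"
    by (auto simp: less_SUP_iff)
  have Ks: "K \<in> sets \<mu>" using K(1) assms(2) compact_imp_closed borel_closed by auto
  have "1 - e < measure \<mu> K"
  proof (cases "0 \<le> 1 - e")
    case True then show ?thesis using K(2) by (simp add: emeasure_eq_measure ennreal_less_iff)
  next
    case False then show ?thesis by (smt (verit) measure_nonneg)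
  qed
  moreover have "measure \<mu> (UNIV - K) = 1 - measure \<mu> K"
    using prob_compl[OF Ks] sp by simp
  ultimately show ?thesis using that K(1) by auto
qed

lemma rel_compact_subset:
  assumes "rel_compact_in T S'" "S \<subseteq> S'"
  shows "rel_compact_in T S"
  using assms unfolding rel_compact_in_def
  by (meson closed_compactin closedin_closure_of closure_of_mono order_trans)


lemma meas_borel_cong:
  assumes "sets M = sets borel" "g \<in> borel_measurable borel"
  shows "g \<in> borel_measurable M"
  using assms measurable_cong_sets[OF assms(1) refl] by simp

lemma prod_coupling:
  fixes \<mu> \<nu> :: "'a::polish_space measure"
  assumes "\<mu> \<in> Pp p" "\<nu> \<in> Pp p" "p > 0"
  shows "\<exists>\<gamma>\<in>couplings \<mu> \<nu>. (\<integral>\<^sup>+z. ennreal (dist (fst z) (snd z) powr p) \<partial>\<gamma>) < \<infinity>"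
proof -
  from assms(1) obtain a where pm: "prob_space \<mu>" and sm: "sets \<mu> = sets borel"
    and ca: "(\<integral>\<^sup>+ x. ennreal (dist x a powr p) \<partial>\<mu>) < \<infinity>"
    by (auto simp: Pp_def prob_measures_def)
  from assms(2) obtain b where pn: "prob_space \<nu>" and sn: "sets \<nu> = sets borel"
    and cb: "(\<integral>\<^sup>+ x. ennreal (dist x b powr p) \<partial>\<nu>) < \<infinity>"
    by (auto simp: Pp_def prob_measures_def)
  interpret M: prob_space \<mu> by fact
  interpret N: prob_space \<nu> by fact
  interpret P: pair_prob_space \<mu> \<nu> by unfold_locales
  define \<gamma> where "\<gamma> = \<mu> \<Otimes>\<^sub>M \<nu>"
  have sg: "sets \<gamma> = sets borel"
    unfolding \<gamma>_def using sets_pair_measure_cong[OF sm sn] borel_prod by metis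
  have spg: "space \<gamma> = UNIV" using sg by (metis sets_eq_imp_space_eq space_borel)
  have pg: "prob_space \<gamma>" unfolding \<gamma>_def by (rule prob_space_pair) fact+
  have d1: "distr \<gamma> borel fst = \<mu>"
  proof -
    have "distr \<gamma> borel fst = distr \<gamma> \<mu> fst" by (rule distr_cong) (use sm in auto)
    also have "\<dots> = \<mu>" unfolding \<gamma>_def by (rule N.distr_pair_fst)
    finally show ?thesis .
  qed
  have d2: "distr \<gamma> borel snd = \<nu>"
  proof -
    have "distr \<gamma> borel snd = distr \<gamma> \<nu> snd" by (rule distr_cong) (use sn in auto)
    also have "\<dots> = \<nu>" unfolding \<gamma>_def
    proof (intro measure_eqI)
      fix A assume A: "A \<in> sets (distr (\<mu> \<Otimes>\<^sub>M \<nu>) \<nu> snd)"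
      from A have "emeasure (distr (\<mu> \<Otimes>\<^sub>M \<nu>) \<nu> snd) A = emeasure (\<mu> \<Otimes>\<^sub>M \<nu>) (space \<mu> \<times> A)"
        by (auto simp add: emeasure_distr space_pair_measure dest: sets.sets_into_space intro!: arg_cong2[where f=emeasure])
      with A show "emeasure (distr (\<mu> \<Otimes>\<^sub>M \<nu>) \<nu> snd) A = emeasure \<nu> A"
        by (simp add: N.emeasure_pair_measure_Times M.emeasure_space_1)
    qed simp
    finally show ?thesis .
  qed
  have cont_d: "(\<lambda>z::'a\<times>'a. dist (fst z) (snd z)) \<in> borel_measurable borel"
    by (intro borel_measurable_continuous_onI continuous_intros)
  have ma: "(\<lambda>x::'a. ennreal (dist x a powr p)) \<in> borel_measurable borel" by measurable
  have mb: "(\<lambda>x::'a. ennreal (dist x b powr p)) \<in> borel_measurable borel" by measurable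
  have fstm: "fst \<in> measurable \<gamma> borel"
    by (rule meas_borel_cong[OF sg]) (intro borel_measurable_continuous_onI continuous_intros)
  have sndm: "snd \<in> measurable \<gamma> borel"
    by (rule meas_borel_cong[OF sg]) (intro borel_measurable_continuous_onI continuous_intros)
  have ptw: "ennreal (dist (fst z) (snd z) powr p) \<le> ennreal (3 powr p) *
     (ennreal (dist (fst z) a powr p) + ennreal (dist a b powr p) + ennreal (dist (snd z) b powr p))" for z
  proof -
    let ?x = "fst z" and ?y = "snd z"
    let ?m = "max (dist ?x a) (max (dist a b) (dist ?y b))"
    have "dist ?x ?y \<le> dist ?x a + dist a b + dist ?y b"
      using dist_triangle[of ?x ?y b] dist_triangle[of ?x b a] dist_commute[of b ?y] by linarith
    also have "\<dots> \<le> 3 * ?m" by simp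
    finally have "dist ?x ?y powr p \<le> (3 * ?m) powr p" using assms(3) by (intro powr_mono2) auto
    also have "\<dots> = 3 powr p * ?m powr p" by (simp add: powr_mult)
    also have "?m powr p \<le> dist ?x a powr p + dist a b powr p + dist ?y b powr p"
    proof -
      have "?m = dist ?x a \<or> ?m = dist a b \<or> ?m = dist ?y b" by (auto simp: max_def)
      moreover have "0 \<le> dist ?x a powr p" "0 \<le> dist a b powr p" "0 \<le> dist ?y b powr p" by auto
      ultimately show ?thesis by auto
    qed
    then have "3 powr p * ?m powr p \<le> 3 powr p * (dist ?x a powr p + dist a b powr p + dist ?y b powr p)"
      by (intro mult_left_mono) auto
    finally have "dist ?x ?y powr p \<le> 3 powr p * (dist ?x a powr p + dist a b powr p + dist ?y b powr p)" .
    then have "ennreal (dist ?x ?y powr p) \<le> ennreal (3 powr p * (dist ?x a powr p + dist a b powr p + dist ?y b powr p))"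
      by (rule ennreal_leI)
    also have "\<dots> = ennreal (3 powr p) * ennreal (dist ?x a powr p + dist a b powr p + dist ?y b powr p)"
      by (rule ennreal_mult) auto
    also have "ennreal (dist ?x a powr p + dist a b powr p + dist ?y b powr p) = ennreal (dist ?x a powr p) + ennreal (dist a b powr p) + ennreal (dist ?y b powr p)"
      by (simp add: ennreal_plus)
    finally show ?thesis .
  qed
  have "(\<integral>\<^sup>+z. ennreal (dist (fst z) (snd z) powr p) \<partial>\<gamma>) \<le> (\<integral>\<^sup>+z. ennreal (3 powr p) *
     (ennreal (dist (fst z) a powr p) + ennreal (dist a b powr p) + ennreal (dist (snd z) b powr p)) \<partial>\<gamma>)"
    by (intro nn_integral_mono ptw)
  also have "\<dots> = ennreal (3 powr p) * ((\<integral>\<^sup>+z. ennreal (dist (fst z) a powr p) \<partial>\<gamma>) + ennreal (dist a b powr p) + (\<integral>\<^sup>+z. ennreal (dist (snd z) b powr p) \<partial>\<gamma>))"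
    using measurable_comp[OF fstm ma] measurable_comp[OF sndm mb] pg
    by (simp add: nn_integral_cmult nn_integral_add prob_space.emeasure_space_1 o_def)
  also have "(\<integral>\<^sup>+z. ennreal (dist (fst z) a powr p) \<partial>\<gamma>) = (\<integral>\<^sup>+ x. ennreal (dist x a powr p) \<partial>\<mu>)"
  proof -
    have "(\<lambda>x. ennreal (dist x a powr p)) \<in> borel_measurable (distr \<gamma> borel fst)" by (simp add: d1 meas_borel_cong[OF sm ma])
    from nn_integral_distr[OF fstm this, unfolded d1] show ?thesis by simp
  qed
  also have "(\<integral>\<^sup>+z. ennreal (dist (snd z) b powr p) \<partial>\<gamma>) = (\<integral>\<^sup>+ x. ennreal (dist x b powr p) \<partial>\<nu>)"
  proof -
    have "(\<lambda>x. ennreal (dist x b powr p)) \<in> borel_measurable (distr \<gamma> borel snd)" by (simp add: d2 meas_borel_cong[OF sn mb])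
    from nn_integral_distr[OF sndm this, unfolded d2] show ?thesis by simp
  qed
  also have "ennreal (3 powr p) * ((\<integral>\<^sup>+ x. ennreal (dist x a powr p) \<partial>\<mu>) + ennreal (dist a b powr p) + (\<integral>\<^sup>+ x. ennreal (dist x b powr p) \<partial>\<nu>)) < \<infinity>"
    using ca cb by (simp add: ennreal_mult_less_top)
  finally have "(\<integral>\<^sup>+z. ennreal (dist (fst z) (snd z) powr p) \<partial>\<gamma>) < \<infinity>" .
  moreover have "\<gamma> \<in> couplings \<mu> \<nu>" using pg sg d1 d2 by (simp add: couplings_def)
  ultimately show ?thesis by blast
qed


lemma W_coupling:
  fixes \<mu> \<nu> :: "'a::polish_space measure"
  assumes "\<mu> \<in> Pp p" "\<nu> \<in> Pp p" "p > 0" "\<eta> > 0" "Wp p \<mu> \<nu> < \<eta> powr (1/p)"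
  shows "\<exists>\<gamma>\<in>couplings \<mu> \<nu>. (\<integral>\<^sup>+z. ennreal (dist (fst z) (snd z) powr p) \<partial>\<gamma>) < ennreal \<eta>"
proof -
  define I where "I = (INF \<gamma>\<in>couplings \<mu> \<nu>. \<integral>\<^sup>+z. ennreal (dist (fst z) (snd z) powr p) \<partial>\<gamma>)"
  obtain \<gamma>0 where g0: "\<gamma>0 \<in> couplings \<mu> \<nu>" "(\<integral>\<^sup>+z. ennreal (dist (fst z) (snd z) powr p) \<partial>\<gamma>0) < \<infinity>"
    using prod_coupling[OF assms(1-3)] by blast
  have "I \<le> (\<integral>\<^sup>+z. ennreal (dist (fst z) (snd z) powr p) \<partial>\<gamma>0)"
    unfolding I_def by (rule INF_lower) fact
  then have "I < \<infinity>" using g0(2) by (rule le_less_trans)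
  then obtain r where r: "I = ennreal r" "0 \<le> r" by (cases I) auto
  have W: "Wp p \<mu> \<nu> = r powr (1/p)" unfolding Wp_def using r by (simp add: I_def[symmetric])
  have "r < \<eta>"
  proof (rule ccontr)
    assume "\<not> r < \<eta>"
    then have "\<eta> powr (1/p) \<le> r powr (1/p)" using assms(3,4) by (intro powr_mono2) auto
    then show False using assms(5) W by simp
  qed
  then have "I < ennreal \<eta>" using r by (simp add: ennreal_lessI)
  then show ?thesis unfolding I_def by (simp add: INF_less_iff)
qed

lemma coupling_close:
  fixes \<mu> :: "'a::polish_space measure" and f :: "'a \<Rightarrow> real"
  assumes pm: "prob_space \<mu>" and sm: "sets \<mu> = sets borel"
    and fc: "continuous_on UNIV f" and fb: "\<And>x. \<bar>f x\<bar> \<le> M" and "\<epsilon> > 0" "p > 0"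
  obtains \<eta> where "\<eta> > 0" "\<And>\<nu> \<gamma>. \<gamma> \<in> couplings \<mu> \<nu> \<Longrightarrow>
      (\<integral>\<^sup>+z. ennreal (dist (fst z) (snd z) powr p) \<partial>\<gamma>) < ennreal \<eta> \<Longrightarrow>
      \<bar>(\<integral>x. f x \<partial>\<mu>) - (\<integral>x. f x \<partial>\<nu>)\<bar> \<le> \<epsilon>"
proof -
  have M0: "0 \<le> M" using fb[of undefined] by linarith
  define e where "e = \<epsilon> / (2 + 4*M)"
  have e0: "e > 0" using M0 assms by (simp add: e_def)
  have e_le: "e * (1 + 4*M) \<le> \<epsilon>"
  proof -
    have "e * (2 + 4*M) = \<epsilon>" using M0 by (simp add: e_def)
    moreover have "e * (1 + 4*M) = e * (2 + 4*M) - e" by (simp add: algebra_simps)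
    ultimately show ?thesis using e0 by linarith
  qed
  obtain K where K: "compact K" "measure \<mu> (UNIV - K) < e" using tight[OF pm sm e0] by blast
  obtain d where d: "d > 0" "\<And>x y. y \<in> K \<Longrightarrow> dist x y < d \<Longrightarrow> \<bar>f x - f y\<bar> < e"
    using unif_near_compact[OF fc K(1) e0] by blast
  define \<eta> where "\<eta> = e * d powr p"
  have \<eta>0: "\<eta> > 0" using e0 d(1) by (simp add: \<eta>_def)
  have dp0: "d powr p > 0" using d(1) by simp
  show ?thesis
  proof (rule that[OF \<eta>0])
    fix \<nu> \<gamma> assume g: "\<gamma> \<in> couplings \<mu> \<nu>"
      and c: "(\<integral>\<^sup>+z. ennreal (dist (fst z) (snd z) powr p) \<partial>\<gamma>) < ennreal \<eta>"
    from g have pg: "prob_space \<gamma>" and sg: "sets \<gamma> = sets borel"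
      and m1: "distr \<gamma> borel fst = \<mu>" and m2: "distr \<gamma> borel snd = \<nu>"
      by (auto simp: couplings_def)
    interpret G: prob_space \<gamma> by fact
    have fm: "f \<in> borel_measurable borel" using fc by (rule borel_measurable_continuous_onI)
    have fstm: "fst \<in> measurable \<gamma> borel"
      by (rule meas_borel_cong[OF sg]) (intro borel_measurable_continuous_onI continuous_intros)
    have sndm: "snd \<in> measurable \<gamma> borel"
      by (rule meas_borel_cong[OF sg]) (intro borel_measurable_continuous_onI continuous_intros)
    have f1m: "(\<lambda>z. f (fst z)) \<in> borel_measurable \<gamma>" using measurable_comp[OF fstm fm] by (simp add: o_def)
    have f2m: "(\<lambda>z. f (snd z)) \<in> borel_measurable \<gamma>" using measurable_comp[OF sndm fm] by (simp add: o_def)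
    have I1: "(\<integral>x. f x \<partial>\<mu>) = (\<integral>z. f (fst z) \<partial>\<gamma>)" using integral_distr[OF fstm fm] m1 by simp
    have I2: "(\<integral>x. f x \<partial>\<nu>) = (\<integral>z. f (snd z) \<partial>\<gamma>)" using integral_distr[OF sndm fm] m2 by simp
    define g where "g z = f (fst z) - f (snd z)" for z
    have gm: "g \<in> borel_measurable \<gamma>" unfolding g_def using f1m f2m by measurable
    have int1: "integrable \<gamma> (\<lambda>z. f (fst z))" using fb f1m by (intro G.integrable_const_bound[where B=M]) auto
    have int2: "integrable \<gamma> (\<lambda>z. f (snd z))" using fb f2m by (intro G.integrable_const_bound[where B=M]) auto
    have intg: "integrable \<gamma> g" unfolding g_def using int1 int2 by simp
    have eq: "(\<integral>x. f x \<partial>\<mu>) - (\<integral>x. f x \<partial>\<nu>) = (\<integral>z. g z \<partial>\<gamma>)"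
      unfolding I1 I2 g_def using int1 int2 by simp
    have cm: "(\<lambda>z::'a\<times>'a. ennreal (dist (fst z) (snd z) powr p)) \<in> borel_measurable \<gamma>"
      using fstm sndm by measurable
    have im: "(\<lambda>z. indicator (UNIV - K) (fst z) :: ennreal) \<in> borel_measurable \<gamma>"
    proof -
      have "(UNIV - K) \<in> sets borel" using K(1) compact_imp_closed by (auto intro: borel_open)
      then show ?thesis using fstm by measurable
    qed
    have ptw: "ennreal \<bar>g z\<bar> \<le> ennreal e + ennreal (2*M) * indicator (UNIV - K) (fst z)
        + ennreal (2*M / d powr p) * ennreal (dist (fst z) (snd z) powr p)" for z
    proof -
      have bnd: "\<bar>g z\<bar> \<le> 2*M" unfolding g_def using fb[of "fst z"] fb[of "snd z"] by linarith
      have nn1: "0 \<le> 2*M * indicator (UNIV - K) (fst z)" using M0 by simp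
      have nn2: "0 \<le> 2*M / d powr p * dist (fst z) (snd z) powr p" using M0 by simp
      have "\<bar>g z\<bar> \<le> e + 2*M * indicator (UNIV - K) (fst z) + 2*M / d powr p * dist (fst z) (snd z) powr p"
      proof (cases "fst z \<in> K")
        case False
        then have "2*M * indicator (UNIV - K) (fst z) = 2*M" by simp
        then show ?thesis using bnd e0 nn2 by linarith
      next
        case True
        show ?thesis
        proof (cases "dist (snd z) (fst z) < d")
          case True
          then have "\<bar>g z\<bar> < e" using d(2)[OF \<open>fst z \<in> K\<close> True] unfolding g_def by linarith
          then show ?thesis using nn1 nn2 by linarith
        next
          case False
          then have "d powr p \<le> dist (fst z) (snd z) powr p"
            using d(1) assms(6) by (intro powr_mono2) (auto simp: dist_commute)
          then have "2*M / d powr p * d powr p \<le> 2*M / d powr p * dist (fst z) (snd z) powr p"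
            using M0 dp0 by (intro mult_left_mono) auto
          then have "2*M \<le> 2*M / d powr p * dist (fst z) (snd z) powr p" using dp0 by simp
          then show ?thesis using bnd e0 nn1 by linarith
        qed
      qed
      then have "ennreal \<bar>g z\<bar> \<le> ennreal (e + 2*M * indicator (UNIV - K) (fst z) + 2*M / d powr p * dist (fst z) (snd z) powr p)"
        by (rule ennreal_leI)
      also have "\<dots> = ennreal e + ennreal (2*M * indicator (UNIV - K) (fst z)) + ennreal (2*M / d powr p * dist (fst z) (snd z) powr p)"
        using e0 nn1 nn2 by (simp add: ennreal_plus)
      also have "ennreal (2*M * indicator (UNIV - K) (fst z)) = ennreal (2*M) * indicator (UNIV - K) (fst z)"
        using M0 by (simp add: ennreal_mult indicator_def)
      also have "ennreal (2*M / d powr p * dist (fst z) (snd z) powr p) = ennreal (2*M / d powr p) * ennreal (dist (fst z) (snd z) powr p)"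
        using M0 by (intro ennreal_mult) auto
      finally show ?thesis .
    qed
    have ind: "(\<integral>\<^sup>+z. indicator (UNIV - K) (fst z) \<partial>\<gamma>) = emeasure \<mu> (UNIV - K)"
    proof -
      have Km: "(UNIV - K) \<in> sets borel" using K(1) compact_imp_closed by (auto intro: borel_open)
      have "(indicator (UNIV - K) :: 'a \<Rightarrow> ennreal) \<in> borel_measurable (distr \<gamma> borel fst)"
        using Km by simp
      from nn_integral_distr[OF fstm this, unfolded m1] have
        "(\<integral>\<^sup>+x. indicator (UNIV - K) x \<partial>\<mu>) = (\<integral>\<^sup>+z. indicator (UNIV - K) (fst z) \<partial>\<gamma>)" .
      moreover have "(\<integral>\<^sup>+x. indicator (UNIV - K) x \<partial>\<mu>) = emeasure \<mu> (UNIV - K)"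
        using Km sm by (intro nn_integral_indicator) simp
      ultimately show ?thesis by simp
    qed
    have "ennreal (\<integral>z. \<bar>g z\<bar> \<partial>\<gamma>) = (\<integral>\<^sup>+z. ennreal \<bar>g z\<bar> \<partial>\<gamma>)"
      using intg by (intro nn_integral_eq_integral[symmetric]) auto
    also have "\<dots> \<le> (\<integral>\<^sup>+z. ennreal e + ennreal (2*M) * indicator (UNIV - K) (fst z)
        + ennreal (2*M / d powr p) * ennreal (dist (fst z) (snd z) powr p) \<partial>\<gamma>)"
      by (intro nn_integral_mono ptw)
    also have "\<dots> = ennreal e + ennreal (2*M) * (\<integral>\<^sup>+z. indicator (UNIV - K) (fst z) \<partial>\<gamma>)
        + ennreal (2*M / d powr p) * (\<integral>\<^sup>+z. ennreal (dist (fst z) (snd z) powr p) \<partial>\<gamma>)"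
      using im cm by (simp add: nn_integral_add nn_integral_cmult G.emeasure_space_1)
    also have "\<dots> \<le> ennreal e + ennreal (2*M) * ennreal e + ennreal (2*M / d powr p) * ennreal \<eta>"
    proof -
      have "emeasure \<mu> (UNIV - K) \<le> ennreal e"
      proof -
        interpret Mu: prob_space \<mu> by fact
        show ?thesis using K(2) by (simp add: Mu.emeasure_eq_measure ennreal_leI)
      qed
      then show ?thesis unfolding ind using c
        by (intro add_mono mult_left_mono order_refl) auto
    qed
    also have "\<dots> = ennreal (e + 2*M*e + 2*M / d powr p * \<eta>)"
    proof -
      have n1: "0 \<le> 2*M*e" "0 \<le> 2*M / d powr p * \<eta>" using M0 e0 \<eta>0 by auto
      have a: "ennreal (2*M) * ennreal e = ennreal (2*M*e)" by (rule ennreal_mult[symmetric]) (use M0 e0 in auto)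
      have b: "ennreal (2*M / d powr p) * ennreal \<eta> = ennreal (2*M / d powr p * \<eta>)"
        by (rule ennreal_mult[symmetric]) (use M0 \<eta>0 in auto)
      have c1: "ennreal (e + 2*M*e + 2*M / d powr p * \<eta>) = ennreal (e + 2*M*e) + ennreal (2*M / d powr p * \<eta>)"
        by (rule ennreal_plus) (use n1 e0 in auto)
      have c2: "ennreal (e + 2*M*e) = ennreal e + ennreal (2*M*e)"
        by (rule ennreal_plus) (use n1 e0 in auto)
      show ?thesis unfolding a b c1 c2 ..
    qed
    also have "e + 2*M*e + 2*M / d powr p * \<eta> = e * (1 + 4*M)"
      using dp0 by (simp add: \<eta>_def field_simps)
    finally have "(\<integral>z. \<bar>g z\<bar> \<partial>\<gamma>) \<le> e * (1 + 4*M)"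
      using e0 M0 by (simp add: ennreal_le_iff)
    moreover have "\<bar>\<integral>z. g z \<partial>\<gamma>\<bar> \<le> (\<integral>z. \<bar>g z\<bar> \<partial>\<gamma>)" by (rule integral_abs_bound)
    ultimately show "\<bar>(\<integral>x. f x \<partial>\<mu>) - (\<integral>x. f x \<partial>\<nu>)\<bar> \<le> \<epsilon>" using eq e_le by linarith
  qed
qed


theorem lemma3p1:
  fixes p :: real
    and E :: "'a::polish_space measure \<Rightarrow> ereal"
    and G :: "'a measure \<Rightarrow> ennreal"
    and \<rho> :: "real \<Rightarrow> 'a measure"
    and \<rho>0 :: "'a measure"
  assumes "1 < p"
    and "proper_fun p E"
    and "weak_upper_gradient p E G"
    and "\<rho>0 \<in> Z_set p E"
    and "curve_max_slope p E G \<rho>"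
    and "\<rho> 0 = \<rho>0"
    and "A1 p E" and "A3 p G"
    and "A2 p E \<or> A2' p E \<rho>"
  shows "rel_compact_in (sigma_top p) (\<Union>t\<in>{0..}. {\<rho> t})"
proof -
  have p0: "p > 0" using assms(1) by simp
  from assms(5) obtain \<phi> where ac: "ac_infty p \<rho>"
    and mono: "\<forall>s t. 0 \<le> s \<and> s \<le> t \<longrightarrow> \<phi> t \<le> \<phi> s"
    and ae: "AE t in lborel. t \<ge> 0 \<longrightarrow> E (\<rho> t) = ereal (\<phi> t)"
    unfolding curve_max_slope_def by blast
  have inPp: "\<And>t. t \<ge> 0 \<Longrightarrow> \<rho> t \<in> Pp p" using ac by (simp add: ac_infty_def)
  from assms(4) have Efin: "E \<rho>0 < \<infinity>" and r0P: "\<rho>0 \<in> Pp p" by (auto simp: Z_set_def)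
  have "E \<rho>0 \<noteq> -\<infinity>" using assms(2) r0P by (auto simp: proper_fun_def)
  with Efin obtain r0 where r0: "E \<rho>0 = ereal r0" by (cases "E \<rho>0") auto
  define C where "C = max (\<phi> 0) r0"
  have closedS: "closedin (sigma_top p) {\<mu> \<in> Pp p. E \<mu> \<le> ereal C}"
    using assms(7) unfolding A1_def by blast
  have key: "E (\<rho> t) \<le> ereal C" if "t \<ge> 0" for t
  proof (cases "t = 0")
    case True then show ?thesis using assms(6) r0 by (simp add: C_def)
  next
    case False
    then have t0: "t > 0" using that by simp
    from ac have "ac_on p t \<rho>" unfolding ac_infty_def using t0 by blast
    then obtain m where mi: "set_integrable lborel {0..t} m"
      and mb: "\<forall>s u. 0 \<le> s \<and> s < u \<and> u \<le> t \<longrightarrow> Wp p (\<rho> u) (\<rho> s) \<le> (LINT \<tau>:{s..u}|lborel. m \<tau>)"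
      unfolding ac_on_def by blast
    have mion: "m integrable_on {0..t}" using set_borel_integral_eq_integral(1)[OF mi] .
    have LI: "(LINT \<tau>:{s..t}|lborel. m \<tau>) = integral {s..t} m" if "0 \<le> s" for s
    proof -
      have "set_integrable lborel {s..t} m" by (rule set_integrable_subset[OF mi]) (use that in auto)
      then show ?thesis by (rule set_borel_integral_eq_integral(2))
    qed
    have contI: "continuous_on {0..t} (\<lambda>s. integral {s..t} m)"
      by (rule indefinite_integral_continuous_1'[OF mion])
    have Wsmall: "\<exists>r>0. \<forall>s. t - r < s \<and> s < t \<and> 0 \<le> s \<longrightarrow> Wp p (\<rho> t) (\<rho> s) < \<eta>" if "\<eta> > 0" for \<eta>
    proof -
      have "t \<in> {0..t}" using t0 by simp
      with contI that obtain r where r: "r > 0"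
        "\<forall>s\<in>{0..t}. dist s t < r \<longrightarrow> dist (integral {s..t} m) (integral {t..t} m) < \<eta>"
        unfolding continuous_on_iff by blast
      show ?thesis
      proof (intro exI[of _ r] conjI allI impI)
        show "r > 0" by fact
        fix s assume s: "t - r < s \<and> s < t \<and> 0 \<le> s"
        then have "dist (integral {s..t} m) (integral {t..t} m) < \<eta>" using r(2) by (auto simp: dist_real_def)
        then have "integral {s..t} m < \<eta>" by (simp add: dist_real_def)
        moreover have "Wp p (\<rho> t) (\<rho> s) \<le> integral {s..t} m"
        proof -
          have "Wp p (\<rho> t) (\<rho> s) \<le> (LINT \<tau>:{s..t}|lborel. m \<tau>)" using mb s by blast
          then show ?thesis using LI[of s] s by simp
        qed
        ultimately show "Wp p (\<rho> t) (\<rho> s) < \<eta>" by linarith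
      qed
    qed
    have "\<forall>n::nat. \<exists>x. max (t/2) (t - inverse (real (Suc n))) < x \<and> x < t \<and> (x \<ge> 0 \<longrightarrow> E (\<rho> x) = ereal (\<phi> x))"
    proof
      fix n :: nat
      have "max (t/2) (t - inverse (real (Suc n))) < t" using t0 by simp
      from AE_exists_between[OF ae this] show "\<exists>x. max (t/2) (t - inverse (real (Suc n))) < x \<and> x < t \<and> (x \<ge> 0 \<longrightarrow> E (\<rho> x) = ereal (\<phi> x))" .
    qed
    from choice[OF this] obtain s where s: "\<And>n. max (t/2) (t - inverse (real (Suc n))) < s n \<and> s n < t \<and> (s n \<ge> 0 \<longrightarrow> E (\<rho> (s n)) = ereal (\<phi> (s n)))"
      by blast
    have s0: "s n > 0" for n using s[of n] t0 by simp
    have st: "s n < t" for n using s[of n] by simp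
    have sE: "E (\<rho> (s n)) = ereal (\<phi> (s n))" for n using s[of n] s0[of n] by simp
    have evW: "eventually (\<lambda>n. Wp p (\<rho> t) (\<rho> (s n)) < \<eta>) sequentially" if \<eta>0: "\<eta> > 0" for \<eta>
    proof -
      obtain r where r: "r > 0" "\<forall>s. t - r < s \<and> s < t \<and> 0 \<le> s \<longrightarrow> Wp p (\<rho> t) (\<rho> s) < \<eta>"
        using Wsmall[OF \<eta>0] by blast
      obtain N :: nat where N: "N > 0" "inverse (real N) < r" using ex_inverse_of_nat_less[OF r(1)] by blast
      show ?thesis unfolding eventually_sequentially
      proof (intro exI allI impI)
        fix n assume "N \<le> n"
        then have "inverse (real (Suc n)) \<le> inverse (real N)" using N(1) by (simp add: le_imp_inverse_le)
        then have "t - r < s n" using s[of n] N(2) by linarith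
        then show "Wp p (\<rho> t) (\<rho> (s n)) < \<eta>" using r(2) st[of n] s0[of n] by auto
      qed
    qed
    have tP: "\<rho> t \<in> Pp p" using inPp that by simp
    have snP: "\<rho> (s n) \<in> Pp p" for n using inPp s0[of n] by simp
    have PpP: "\<And>\<mu>. \<mu> \<in> Pp p \<Longrightarrow> \<mu> \<in> prob_measures" by (simp add: Pp_def)
    have lim: "limitin (sigma_top p) (\<lambda>n. \<rho> (s n)) (\<rho> t) sequentially"
      unfolding sigma_top_def limitin_subtopology
    proof (intro conjI)
      show "\<rho> t \<in> Pp p" by fact
      show "\<forall>\<^sub>F n in sequentially. \<rho> (s n) \<in> Pp p" using snP by simp
      show "limitin narrow_topology (\<lambda>n. \<rho> (s n)) (\<rho> t) sequentially"
        unfolding narrow_topology_def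
      proof (rule limitin_generatedI)
        let ?S = "{{\<mu> \<in> prob_measures. (\<integral>x. f x \<partial>\<mu>) \<in> U} | f U.
            continuous_on UNIV f \<and> bounded (range f) \<and> open (U :: real set)} :: 'a measure set set"
        have "{\<mu> \<in> prob_measures. (\<integral>x. (\<lambda>_. 0::real) x \<partial>\<mu>) \<in> UNIV} \<in> ?S"
          by (intro CollectI exI[of _ "\<lambda>_. 0::real"] exI[of _ UNIV]) auto
        moreover have "\<rho> t \<in> {\<mu> \<in> prob_measures. (\<integral>x. (\<lambda>_. 0::real) x \<partial>\<mu>) \<in> UNIV}"
          using PpP[OF tP] by simp
        ultimately show "\<rho> t \<in> \<Union>?S" by blast
        fix U assume "U \<in> ?S" and tU: "\<rho> t \<in> U"
        then obtain f V where U: "U = {\<mu> \<in> prob_measures. (\<integral>x. f x \<partial>\<mu>) \<in> V}"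
          and fc: "continuous_on UNIV f" and fbd: "bounded (range f)" and oV: "open (V :: real set)"
          by blast
        from fbd obtain M where fb: "\<And>x. \<bar>f x\<bar> \<le> M" unfolding bounded_iff by auto
        have inV: "(\<integral>x. f x \<partial>\<rho> t) \<in> V" using tU U by simp
        from oV inV obtain e where e: "e > 0" "ball (\<integral>x. f x \<partial>\<rho> t) e \<subseteq> V"
          using open_contains_ball by blast
        have tprob: "prob_space (\<rho> t)" "sets (\<rho> t) = sets borel"
          using PpP[OF tP] by (auto simp: prob_measures_def)
        obtain \<eta> where \<eta>: "\<eta> > 0" "\<And>\<nu> \<gamma>. \<gamma> \<in> couplings (\<rho> t) \<nu> \<Longrightarrow>
          (\<integral>\<^sup>+z. ennreal (dist (fst z) (snd z) powr p) \<partial>\<gamma>) < ennreal \<eta> \<Longrightarrow>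
          \<bar>(\<integral>x. f x \<partial>\<rho> t) - (\<integral>x. f x \<partial>\<nu>)\<bar> \<le> e/2"
          using coupling_close[OF tprob fc fb _ p0, of "e/2"] e(1) by auto
        have "\<eta> powr (1/p) > 0" using \<eta>(1) by simp
        from evW[OF this] show "\<forall>\<^sub>F n in sequentially. \<rho> (s n) \<in> U"
        proof (rule eventually_mono)
          fix n assume "Wp p (\<rho> t) (\<rho> (s n)) < \<eta> powr (1/p)"
          from W_coupling[OF tP snP p0 \<eta>(1) this] obtain \<gamma> where
            "\<gamma> \<in> couplings (\<rho> t) (\<rho> (s n))" "(\<integral>\<^sup>+z. ennreal (dist (fst z) (snd z) powr p) \<partial>\<gamma>) < ennreal \<eta>"
            by blast
          from \<eta>(2)[OF this] e(1) have "(\<integral>x. f x \<partial>\<rho> (s n)) \<in> ball (\<integral>x. f x \<partial>\<rho> t) e"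
            by (simp add: dist_real_def)
          then show "\<rho> (s n) \<in> U" using e(2) U PpP[OF snP] by auto
        qed
      qed
    qed
    have "\<rho> t \<in> {\<mu> \<in> Pp p. E \<mu> \<le> ereal C}"
    proof (rule limitin_closedin[OF lim closedS])
      show "\<forall>\<^sub>F n in sequentially. \<rho> (s n) \<in> {\<mu> \<in> Pp p. E \<mu> \<le> ereal C}"
      proof (rule always_eventually, rule allI)
        fix n
        have "\<phi> (s n) \<le> \<phi> 0" using mono s0[of n] by auto
        then have "\<phi> (s n) \<le> C" by (simp add: C_def)
        then have "E (\<rho> (s n)) \<le> ereal C" using sE[of n] by simp
        then show "\<rho> (s n) \<in> {\<mu> \<in> Pp p. E \<mu> \<le> ereal C}" using snP by simp
      qed
    qed simp
    then show ?thesis by simp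
  qed
  from assms(9) show ?thesis
  proof
    assume "A2 p E"
    then have "rel_compact_in (sigma_top p) {\<mu> \<in> Pp p. E \<mu> \<le> ereal C}" unfolding A2_def by blast
    moreover have "(\<Union>t\<in>{0..}. {\<rho> t}) \<subseteq> {\<mu> \<in> Pp p. E \<mu> \<le> ereal C}" using key inPp by auto
    ultimately show ?thesis by (rule rel_compact_subset)
  next
    assume "A2' p E \<rho>"
    then obtain Y where Y: "\<forall>t\<ge>0. \<rho> t \<in> Y"
      "rel_compact_in (sigma_top p) {\<mu> \<in> Pp p \<inter> Y. E \<mu> \<le> ereal C}" unfolding A2'_def by blast
    moreover have "(\<Union>t\<in>{0..}. {\<rho> t}) \<subseteq> {\<mu> \<in> Pp p \<inter> Y. E \<mu> \<le> ereal C}" using key inPp Y(1) by auto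
    ultimately show ?thesis using rel_compact_subset by blast
  qed
qed

end
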